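(* Let $I$ be an open interval and $U$ a subgroup of $\mathrm{Homeo}^+(I)$ such that $U$ acts transitively on $I$, the commutator subgroup $[U,U]$ acts freely on $I$, and each non-identity member of $U$ has only finitely many fixed points. Then each non-identity member of $U$ has at most one fixed point.
   Context: $\mathrm{Homeo}^+(I)$ is the group of increasing homeomorphisms of $I$. $U$ acts transitively if for all $x,y\in I$ some $\varphi\in U$ has $\varphi(x)=y$. $[U,U]$ acts freely if no non-identity element of $[U,U]$ has a fixed point in $I$. *)

theory Defs
  imports "HOL-Analysis.Analysis"
begin

text \<open>Elements of Homeo+(I) are represented as functions real => real that are
  the identity outside I (so that composition and inverses are the group operations).\<close>

definition homeo_plus :: "real set \<Rightarrow> (real \<Rightarrow> real) set" where
  "homeo_plus I = {f. (\<exists>g. homeomorphism I I f g) \<and> strict_mono_on I f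
                        \<and> (\<forall>x. x \<notin> I \<longrightarrow> f x = x)}"

definition hinv :: "real set \<Rightarrow> (real \<Rightarrow> real) \<Rightarrow> real \<Rightarrow> real" where
  "hinv I f = (\<lambda>x. if x \<in> I then inv_into I f x else x)"

definition is_subgroup_homeo :: "real set \<Rightarrow> (real \<Rightarrow> real) set \<Rightarrow> bool" where
  "is_subgroup_homeo I U \<longleftrightarrow> U \<subseteq> homeo_plus I \<and> id \<in> U
     \<and> (\<forall>f\<in>U. \<forall>g\<in>U. f \<circ> g \<in> U) \<and> (\<forall>f\<in>U. hinv I f \<in> U)"

definition commutator :: "real set \<Rightarrow> (real \<Rightarrow> real) \<Rightarrow> (real \<Rightarrow> real) \<Rightarrow> real \<Rightarrow> real" where
  "commutator I f g = f \<circ> g \<circ> hinv I f \<circ> hinv I g"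

inductive_set commutator_subgroup :: "real set \<Rightarrow> (real \<Rightarrow> real) set \<Rightarrow> (real \<Rightarrow> real) set"
  for I U where
  cs_id: "id \<in> commutator_subgroup I U"
| cs_comm: "f \<in> U \<Longrightarrow> g \<in> U \<Longrightarrow> commutator I f g \<in> commutator_subgroup I U"
| cs_mult: "f \<in> commutator_subgroup I U \<Longrightarrow> g \<in> commutator_subgroup I U \<Longrightarrow> f \<circ> g \<in> commutator_subgroup I U"
| cs_inv: "f \<in> commutator_subgroup I U \<Longrightarrow> hinv I f \<in> commutator_subgroup I U"

definition acts_transitively :: "real set \<Rightarrow> (real \<Rightarrow> real) set \<Rightarrow> bool" where
  "acts_transitively I U \<longleftrightarrow> (\<forall>x\<in>I. \<forall>y\<in>I. \<exists>\<phi>\<in>U. \<phi> x = y)"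

definition acts_freely :: "real set \<Rightarrow> (real \<Rightarrow> real) set \<Rightarrow> bool" where
  "acts_freely I G \<longleftrightarrow> (\<forall>f\<in>G. f \<noteq> id \<longrightarrow> (\<forall>x\<in>I. f x \<noteq> x))"

definition fixed_points :: "real set \<Rightarrow> (real \<Rightarrow> real) \<Rightarrow> real set" where
  "fixed_points I f = {x\<in>I. f x = x}"

end

theory Submission
  imports Defs
begin

lemma hinv_f_f:
  assumes "f \<in> homeo_plus I" "x \<in> I"
  shows "hinv I f (f x) = x"
proof -
  have sm: "strict_mono_on I f" using assms(1) unfolding homeo_plus_def by blast
  have inj: "inj_on f I" using strict_mono_on_imp_inj_on[OF sm] .
  obtain g where h: "homeomorphism I I f g" using assms(1) unfolding homeo_plus_def by blast
  have "f x \<in> I" using h assms(2) unfolding homeomorphism_def by blast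
  then show ?thesis using inj assms(2) unfolding hinv_def by simp
qed

lemma homeo_maps:
  assumes "f \<in> homeo_plus I" "x \<in> I"
  shows "f x \<in> I"
proof -
  obtain g where h: "homeomorphism I I f g" using assms(1) unfolding homeo_plus_def by blast
  then show ?thesis using assms(2) unfolding homeomorphism_def by blast
qed

lemma key:
  assumes sg: "is_subgroup_homeo I U"
    and fr: "acts_freely I (commutator_subgroup I U)"
    and f: "f \<in> U" and g: "g \<in> U"
    and a: "a \<in> I" "f a = a" and b: "b \<in> I" "f b = b" and gab: "g a = b"
    and x: "x \<in> I" "f x = x"
  shows "f (g x) = g x"
proof -
  have fh: "f \<in> homeo_plus I" and gh: "g \<in> homeo_plus I"
    using sg f g unfolding is_subgroup_homeo_def by blast+
  have c: "commutator I f g \<in> commutator_subgroup I U" using f g by (rule cs_comm)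
  have "hinv I g b = a" using hinv_f_f[OF gh a(1)] gab by simp
  moreover have "hinv I f a = a" using hinv_f_f[OF fh a(1)] a(2) by simp
  ultimately have "commutator I f g b = b" unfolding commutator_def using gab b(2) by simp
  hence cid: "commutator I f g = id" using fr c b(1) unfolding acts_freely_def by blast
  have gx: "g x \<in> I" using homeo_maps[OF gh x(1)] .
  have "hinv I g (g x) = x" using hinv_f_f[OF gh x(1)] .
  moreover have "hinv I f x = x" using hinv_f_f[OF fh x(1)] x(2) by simp
  ultimately have "commutator I f g (g x) = f (g x)" unfolding commutator_def by simp
  then show ?thesis using cid by simp
qed

theorem lemma4p1:
  fixes I :: "real set" and U :: "(real \<Rightarrow> real) set"
  assumes "open I" and "is_interval I" and "I \<noteq> {}"
    and "is_subgroup_homeo I U"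
    and "acts_transitively I U"
    and "acts_freely I (commutator_subgroup I U)"
    and "\<forall>f\<in>U. f \<noteq> id \<longrightarrow> finite (fixed_points I f)"
  shows "\<forall>f\<in>U. f \<noteq> id \<longrightarrow> card (fixed_points I f) \<le> 1"
proof (intro ballI impI, rule ccontr)
  fix f assume f: "f \<in> U" "f \<noteq> id" and nc: "\<not> card (fixed_points I f) \<le> 1"
  define F where "F = fixed_points I f"
  have fin: "finite F" using assms(7) f unfolding F_def by blast
  have c2: "card F \<ge> 2" using nc unfolding F_def by simp
  then have ne: "F \<noteq> {}" by auto
  define b where "b = Max F"
  have bF: "b \<in> F" using fin ne unfolding b_def by simp
  have "\<exists>a\<in>F. a \<noteq> b"
  proof (rule ccontr)
    assume "\<not> ?thesis"
    then have "F \<subseteq> {b}" by auto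
    then have "card F \<le> 1" using card_mono[of "{b}" F] by simp
    then show False using c2 by simp
  qed
  then obtain a where aF: "a \<in> F" "a \<noteq> b" by blast
  have ab: "a < b" using aF fin unfolding b_def by (simp add: order_neq_le_trans)
  have aI: "a \<in> I" "f a = a" using aF unfolding F_def fixed_points_def by auto
  have bI: "b \<in> I" "f b = b" using bF unfolding F_def fixed_points_def by auto
  obtain g where g: "g \<in> U" "g a = b" using assms(5) aI(1) bI(1) unfolding acts_transitively_def by blast
  have gh: "g \<in> homeo_plus I" using assms(4) g unfolding is_subgroup_homeo_def by blast
  have "f (g b) = g b" using key[OF assms(4) assms(6) f(1) g(1) aI bI g(2) bI] .
  moreover have gbI: "g b \<in> I" using homeo_maps[OF gh bI(1)] .
  ultimately have "g b \<in> F" unfolding F_def fixed_points_def by simp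
  then have "g b \<le> b" using fin unfolding b_def by simp
  moreover have "g a < g b" using gh ab aI(1) bI(1) unfolding homeo_plus_def strict_mono_on_def by blast
  ultimately show False using g(2) by simp
qed

end
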